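(* Let $n\ge2$, $m\ge1$. Let $H_C$ be any Hermitian operator on the $mn$ qubits that is diagonal in the computational basis, and let $U_C(\gamma)=e^{-i\gamma H_C}$. Let $U_M(\beta)=\bigotimes_{b=0}^{m-1}e^{-i\beta H_M^{(b)}}$ where $H_M^{(b)}=\sum_{0\le i<j\le n-1}(X_i^{(b)}X_j^{(b)}+Y_i^{(b)}Y_j^{(b)})$ acts on block $b$. Let $|s_0\rangle=|W_n\rangle^{\otimes m}$ with $|W_n\rangle=\frac1{\sqrt n}\sum_{k=0}^{n-1}|e_k\rangle$. Then for every product basis vector $|x^\star\rangle\in\mathcal H_{\mathrm{OH}}$ and every $(\gamma,\beta)\in\mathbb R^2$ there exists a blockwise permutation $\mathsf P^\star=\bigotimes_{b=0}^{m-1}\mathsf P_b$ such that $$\bigl|\langle x^\star|\mathsf P^{\star\dagger}U_M(\beta)U_C(\gamma)|s_0\rangle\bigr|^2\ \ge\ \frac{1}{n^m}.$$ In particular this holds when $x^\star$ is a feasible optimal label and $(\gamma,\beta)$ ranges over the grid $\{j\pi/n: j=0,\dots,n\}^2$.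
   Context: A block is a register of $n$ qubits; $|e_k\rangle$ denotes the $n$-qubit basis state with qubit $k$ in $|1\rangle$ and all others in $|0\rangle$, $\mathcal H_1=\mathrm{span}\{|e_0\rangle,\dots,|e_{n-1}\rangle\}$, and $\mathcal H_{\mathrm{OH}}=\mathcal H_1^{\otimes m}$ (dimension $n^m$) with product basis $|x\rangle=|e_{j_0}\rangle\otimes\cdots\otimes|e_{j_{m-1}}\rangle$, $x\in\{0,\dots,n-1\}^m$. $X_i^{(b)},Y_i^{(b)}$ are Pauli operators on qubit $i$ of block $b$. Both $U_C(\gamma)$ and $U_M(\beta)$ map $\mathcal H_{\mathrm{OH}}$ to itself. A blockwise permutation is $\mathsf P=\bigotimes_b\mathsf P_b$ with $\mathsf P_b|e_j\rangle=|e_{\pi_b(j)}\rangle$ for permutations $\pi_b$ of $\{0,\dots,n-1\}$. *)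

theory Defs
  imports "Jordan_Normal_Form.Matrix" "HOL-Library.FuncSet" "HOL-Combinatorics.Permutations"
begin

text \<open>Qubit register of N qubits: computational basis states are indexed by
  z < 2^N, qubit q being in state 1 iff bit q of z is set.
  In the m-block setting, qubit i of block b is qubit b*n+i.\<close>

definition hermitian_mat :: "complex mat \<Rightarrow> bool" where
  "hermitian_mat A \<longleftrightarrow> dim_row A = dim_col A \<and>
     (\<forall>i<dim_row A. \<forall>j<dim_col A. A $$ (j,i) = cnj (A $$ (i,j)))"

definition mat_exp :: "complex mat \<Rightarrow> complex mat" where
  "mat_exp A = mat (dim_row A) (dim_col A)
     (\<lambda>(i,j). \<Sum>k. (A ^\<^sub>m k) $$ (i,j) / of_nat (fact k))"

definition pauliX :: "nat \<Rightarrow> nat \<Rightarrow> complex mat" where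
  "pauliX N q = mat (2^N) (2^N) (\<lambda>(r,c). if r = flip_bit q c then 1 else 0)"

definition pauliY :: "nat \<Rightarrow> nat \<Rightarrow> complex mat" where
  "pauliY N q = mat (2^N) (2^N)
     (\<lambda>(r,c). if r = flip_bit q c then (if bit c q then - \<i> else \<i>) else 0)"

definition mixer_block :: "nat \<Rightarrow> nat \<Rightarrow> nat \<Rightarrow> complex mat" where
  "mixer_block m n b = mat (2^(m*n)) (2^(m*n)) (\<lambda>(r,c).
     \<Sum>i<n. \<Sum>j\<in>{i<..<n}.
       (pauliX (m*n) (b*n+i) * pauliX (m*n) (b*n+j)
        + pauliY (m*n) (b*n+i) * pauliY (m*n) (b*n+j)) $$ (r,c))"

text \<open>Product over the blocks b < k of exp(-i beta H_M^(b)); the factors act on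
  disjoint blocks (and commute), so for k = m this is the tensor product.\<close>
fun mixer_unitary_upto :: "nat \<Rightarrow> nat \<Rightarrow> real \<Rightarrow> nat \<Rightarrow> complex mat" where
  "mixer_unitary_upto m n \<beta> 0 = 1\<^sub>m (2^(m*n))"
| "mixer_unitary_upto m n \<beta> (Suc b) =
     mixer_unitary_upto m n \<beta> b * mat_exp ((- \<i> * complex_of_real \<beta>) \<cdot>\<^sub>m mixer_block m n b)"

definition U_M :: "nat \<Rightarrow> nat \<Rightarrow> real \<Rightarrow> complex mat" where
  "U_M m n \<beta> = mixer_unitary_upto m n \<beta> m"

definition U_C :: "complex mat \<Rightarrow> real \<Rightarrow> complex mat" where
  "U_C H \<gamma> = mat_exp ((- \<i> * complex_of_real \<gamma>) \<cdot>\<^sub>m H)"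

text \<open>One-hot labels x \<in> {0..n-1}^m and the index of the product basis state
  |e_{x_0}> \<otimes> ... \<otimes> |e_{x_{m-1}}>.\<close>
definition labels :: "nat \<Rightarrow> nat \<Rightarrow> (nat \<Rightarrow> nat) set" where
  "labels m n = PiE {..<m} (\<lambda>_. {..<n})"

definition oh_index :: "nat \<Rightarrow> nat \<Rightarrow> (nat \<Rightarrow> nat) \<Rightarrow> nat" where
  "oh_index m n x = (\<Sum>b<m. 2 ^ (b*n + x b))"

text \<open>|s_0> = |W_n>^{\<otimes> m} = \<Sum>_x n^{-m/2} |x>.\<close>
definition s0 :: "nat \<Rightarrow> nat \<Rightarrow> complex vec" where
  "s0 m n = vec (2^(m*n)) (\<lambda>z.
     \<Sum>x\<in>labels m n. if oh_index m n x = z then complex_of_real ((1 / sqrt n) ^ m) else 0)"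

text \<open>Blockwise permutation P = \<otimes>_b P_b acting on labels: P|x> = |(\<pi>_b(x_b))_b>.\<close>
definition blockperm :: "nat \<Rightarrow> (nat \<Rightarrow> nat \<Rightarrow> nat) \<Rightarrow> (nat \<Rightarrow> nat) \<Rightarrow> (nat \<Rightarrow> nat)" where
  "blockperm m \<pi> x = (\<lambda>b. if b < m then \<pi> b (x b) else undefined)"

end

theory Submission
  imports Defs
begin

lemma pow_mat_add:
  assumes A: "A \<in> carrier_mat N N"
  shows "A ^\<^sub>m (j + k) = A ^\<^sub>m j * A ^\<^sub>m k"
proof (induction k)
  case 0 then show ?case using A by simp
next
  case (Suc k)
  have "A ^\<^sub>m (j + Suc k) = (A ^\<^sub>m j * A ^\<^sub>m k) * A" using Suc by simp
  also have "\<dots> = A ^\<^sub>m j * (A ^\<^sub>m k * A)"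
    by (rule assoc_mult_mat[of _ N N _ N _ N]) (use A in auto)
  finally show ?case by simp
qed

lemma pow_mat_smult:
  fixes A :: "complex mat"
  assumes A: "A \<in> carrier_mat N N"
  shows "(c \<cdot>\<^sub>m A) ^\<^sub>m k = c ^ k \<cdot>\<^sub>m A ^\<^sub>m k"
proof (induction k)
  case 0 then show ?case using A by (auto intro!: eq_matI)
next
  case (Suc k)
  have "(c \<cdot>\<^sub>m A) ^\<^sub>m Suc k = (c ^ k \<cdot>\<^sub>m A ^\<^sub>m k) * (c \<cdot>\<^sub>m A)" using Suc by simp
  also have "\<dots> = c ^ k \<cdot>\<^sub>m (A ^\<^sub>m k * (c \<cdot>\<^sub>m A))"
    using A mult_smult_assoc_mat[of "A ^\<^sub>m k" N N "c \<cdot>\<^sub>m A" N "c^k"] by simp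
  also have "A ^\<^sub>m k * (c \<cdot>\<^sub>m A) = c \<cdot>\<^sub>m (A ^\<^sub>m k * A)"
    using A mult_smult_distrib[of "A ^\<^sub>m k" N N A N c] by simp
  also have "c ^ k \<cdot>\<^sub>m (c \<cdot>\<^sub>m (A ^\<^sub>m k * A)) = c ^ Suc k \<cdot>\<^sub>m (A ^\<^sub>m k * A)"
    by (auto intro!: eq_matI)
  finally show ?case by simp
qed

lemma pow_mat_entry_bound:
  fixes A :: "complex mat"
  assumes A: "A \<in> carrier_mat N N"
  shows "r < N \<Longrightarrow> l < N \<Longrightarrow> cmod ((A ^\<^sub>m k) $$ (r,l)) \<le> (\<Sum>i<N. \<Sum>j<N. cmod (A $$ (i,j))) ^ k"
proof (induction k arbitrary: r l)
  case 0 then show ?case using A by auto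
next
  case (Suc k)
  define c where "c = (\<Sum>i<N. \<Sum>j<N. cmod (A $$ (i,j)))"
  have c0: "c \<ge> 0" unfolding c_def by (auto intro!: sum_nonneg)
  have col: "(\<Sum>i<N. cmod (A $$ (i,l))) \<le> c"
    unfolding c_def
    by (rule sum_mono) (rule member_le_sum, use Suc.prems in auto)
  have "(A ^\<^sub>m Suc k) $$ (r,l) = (\<Sum>i<N. (A ^\<^sub>m k) $$ (r,i) * A $$ (i,l))"
    using A Suc.prems by (simp add: scalar_prod_def lessThan_atLeast0)
  hence "cmod ((A ^\<^sub>m Suc k) $$ (r,l)) \<le> (\<Sum>i<N. cmod ((A ^\<^sub>m k) $$ (r,i)) * cmod (A $$ (i,l)))"
    by (simp add: norm_mult[symmetric] norm_sum)
  also have "\<dots> \<le> (\<Sum>i<N. c ^ k * cmod (A $$ (i,l)))"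
    by (rule sum_mono, rule mult_right_mono) (use Suc.IH Suc.prems c_def in auto)
  also have "\<dots> = c ^ k * (\<Sum>i<N. cmod (A $$ (i,l)))" by (simp add: sum_distrib_left)
  also have "\<dots> \<le> c ^ k * c" using col c0 by (simp add: mult_left_mono)
  finally show ?case unfolding c_def by (simp add: mult.commute)
qed

lemma summable_pow_entry:
  fixes A :: "complex mat"
  assumes A: "A \<in> carrier_mat N N" and "r < N" "l < N"
  shows "summable (\<lambda>k. norm ((A ^\<^sub>m k) $$ (r,l) / of_nat (fact k)))"
proof -
  define c where "c = (\<Sum>i<N. \<Sum>j<N. cmod (A $$ (i,j)))"
  have "summable (\<lambda>k. inverse (fact k) * c ^ k)" by (rule summable_exp)
  then show ?thesis
  proof (rule summable_comparison_test[rotated], intro exI[of _ 0] allI impI)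
    fix k :: nat
    have "norm (norm ((A ^\<^sub>m k) $$ (r,l) / of_nat (fact k))) = cmod ((A ^\<^sub>m k) $$ (r,l)) / fact k"
      by (simp add: norm_divide)
    also have "\<dots> \<le> c ^ k / fact k"
      by (rule divide_right_mono) (use pow_mat_entry_bound[OF A assms(2,3)] c_def in auto)
    finally show "norm (norm ((A ^\<^sub>m k) $$ (r,l) / of_nat (fact k))) \<le> inverse (fact k) * c ^ k"
      by (simp add: field_simps)
  qed
qed


lemma mat_exp_index:
  "i < dim_row A \<Longrightarrow> j < dim_col A \<Longrightarrow>
   mat_exp A $$ (i,j) = (\<Sum>k. (A ^\<^sub>m k) $$ (i,j) / of_nat (fact k))"
  by (simp add: mat_exp_def)

lemma mat_exp_carrier[simp]: "A \<in> carrier_mat N N \<Longrightarrow> mat_exp A \<in> carrier_mat N N"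
  unfolding mat_exp_def carrier_mat_def by auto

lemma alt_inner:
  fixes K :: "complex mat"
  assumes K: "K \<in> carrier_mat N N" and rc: "r < N" "c < N"
  shows "(\<Sum>l<N. \<Sum>i\<le>k. (((-1) \<cdot>\<^sub>m K) ^\<^sub>m i) $$ (r,l) / of_nat (fact i) * ((K ^\<^sub>m (k - i)) $$ (l,c) / of_nat (fact (k - i))))
     = (if k = 0 then (if r = c then 1 else 0) else 0)"
proof -
  have "(\<Sum>l<N. \<Sum>i\<le>k. (((-1) \<cdot>\<^sub>m K) ^\<^sub>m i) $$ (r,l) / of_nat (fact i) * ((K ^\<^sub>m (k - i)) $$ (l,c) / of_nat (fact (k - i))))
     = (\<Sum>i\<le>k. \<Sum>l<N. ((-1)^i / (of_nat (fact i) * of_nat (fact (k - i)))) * ((K ^\<^sub>m i) $$ (r,l) * (K ^\<^sub>m (k - i)) $$ (l,c)))"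
    apply (subst sum.swap)
    apply (rule sum.cong[OF refl])+
    using K rc by (simp add: pow_mat_smult[OF K])
  also have "\<dots> = (\<Sum>i\<le>k. ((-1)^i / (of_nat (fact i) * of_nat (fact (k - i)))) * (K ^\<^sub>m k) $$ (r,c))"
  proof (rule sum.cong[OF refl])
    fix i assume i: "i \<in> {..k}"
    have "(K ^\<^sub>m k) $$ (r,c) = (K ^\<^sub>m i * K ^\<^sub>m (k - i)) $$ (r,c)"
      using pow_mat_add[OF K, of i "k - i"] i by simp
    also have "\<dots> = (\<Sum>l<N. (K ^\<^sub>m i) $$ (r,l) * (K ^\<^sub>m (k - i)) $$ (l,c))"
      using K rc by (simp add: scalar_prod_def lessThan_atLeast0)
    finally show "(\<Sum>l<N. ((-1)^i / (of_nat (fact i) * of_nat (fact (k - i)))) * ((K ^\<^sub>m i) $$ (r,l) * (K ^\<^sub>m (k - i)) $$ (l,c)))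
       = ((-1)^i / (of_nat (fact i) * of_nat (fact (k - i)))) * (K ^\<^sub>m k) $$ (r,c)"
      by (simp add: sum_distrib_left)
  qed
  also have "\<dots> = (K ^\<^sub>m k) $$ (r,c) / of_nat (fact k) * (\<Sum>i\<le>k. (-1)^i * of_nat (k choose i))"
    unfolding sum_distrib_left
  proof (rule sum.cong[OF refl])
    fix i assume i: "i \<in> {..k}"
    have "(of_nat (k choose i) :: complex) = fact k / (fact i * fact (k - i))"
      using i by (simp add: binomial_fact)
    then show "(-1)^i / (of_nat (fact i) * of_nat (fact (k - i))) * (K ^\<^sub>m k) $$ (r,c)
      = (K ^\<^sub>m k) $$ (r,c) / of_nat (fact k) * ((-1)^i * of_nat (k choose i))"
      by (simp add: field_simps)
  qed
  also have "\<dots> = (if k = 0 then (if r = c then 1 else 0) else 0)"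
    using choose_alternating_sum[of k, where 'a=complex] K rc by auto
  finally show ?thesis .
qed

lemma mat_exp_inv:
  fixes K :: "complex mat"
  assumes K: "K \<in> carrier_mat N N"
  shows "mat_exp ((-1) \<cdot>\<^sub>m K) * mat_exp K = 1\<^sub>m N"
proof (rule eq_matI)
  have K': "(-1) \<cdot>\<^sub>m K \<in> carrier_mat N N" using K by simp
  show "dim_row (mat_exp ((-1) \<cdot>\<^sub>m K) * mat_exp K) = dim_row (1\<^sub>m N)"
    "dim_col (mat_exp ((-1) \<cdot>\<^sub>m K) * mat_exp K) = dim_col (1\<^sub>m N)"
    using K K' by (auto simp: mat_exp_def)
  fix r c assume "r < dim_row (1\<^sub>m N)" "c < dim_col (1\<^sub>m N)"
  hence rc: "r < N" "c < N" by auto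
  define a where "a l j = (((-1) \<cdot>\<^sub>m K) ^\<^sub>m j) $$ (r,l) / of_nat (fact j)" for l j
  define b where "b l k = (K ^\<^sub>m k) $$ (l,c) / of_nat (fact k)" for l k
  have sa: "summable (\<lambda>j. norm (a l j))" if "l < N" for l
    unfolding a_def by (rule summable_pow_entry[OF K']) (use rc that in auto)
  have sb: "summable (\<lambda>j. norm (b l j))" if "l < N" for l
    unfolding b_def by (rule summable_pow_entry[OF K]) (use rc that in auto)
  have "(mat_exp ((-1) \<cdot>\<^sub>m K) * mat_exp K) $$ (r,c) = (\<Sum>l<N. (\<Sum>j. a l j) * (\<Sum>k. b l k))"
    using K K' rc by (simp add: scalar_prod_def lessThan_atLeast0 mat_exp_def a_def b_def)
  also have "\<dots> = (\<Sum>l<N. \<Sum>k. \<Sum>i\<le>k. a l i * b l (k - i))"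
    by (rule sum.cong[OF refl], rule Cauchy_product) (use sa sb in auto)
  also have "\<dots> = (\<Sum>k. \<Sum>l<N. \<Sum>i\<le>k. a l i * b l (k - i))"
    by (rule suminf_sum[symmetric], rule summable_Cauchy_product) (use sa sb in auto)
  also have "\<dots> = (\<Sum>k. if k = 0 then (if r = c then 1 else 0) else 0)"
    unfolding a_def b_def using alt_inner[OF K rc] by simp
  also have "\<dots> = (if r = c then 1 else 0)"
    using sums_single[of 0 "\<lambda>_. if r = c then 1 else (0::complex)"] sums_unique by fastforce
  finally show "(mat_exp ((-1) \<cdot>\<^sub>m K) * mat_exp K) $$ (r,c) = 1\<^sub>m N $$ (r,c)"
    using rc by simp
qed

lemma herm_pow:
  assumes A: "A \<in> carrier_mat N N" and herm: "hermitian_mat A"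
  shows "r < N \<Longrightarrow> c < N \<Longrightarrow> (A ^\<^sub>m k) $$ (r,c) = cnj ((A ^\<^sub>m k) $$ (c,r))"
proof (induction k arbitrary: r c)
  case 0 then show ?case using A by auto
next
  case (Suc k)
  have dims: "dim_row A = N" "dim_col A = N" using A by auto
  have h: "A $$ (j,i) = cnj (A $$ (i,j))" if "i < N" "j < N" for i j
    using herm that unfolding hermitian_mat_def dims by blast
  have A1: "A ^\<^sub>m 1 = A" using A by simp
  have comm: "A ^\<^sub>m Suc k = A * A ^\<^sub>m k"
    using pow_mat_add[OF A, of 1 k] A1 by simp
  have "(A ^\<^sub>m Suc k) $$ (r,c) = (\<Sum>l<N. (A ^\<^sub>m k) $$ (r,l) * A $$ (l,c))"
    using A Suc.prems by (simp add: scalar_prod_def lessThan_atLeast0)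
  also have "\<dots> = (\<Sum>l<N. cnj (A $$ (c,l) * (A ^\<^sub>m k) $$ (l,r)))"
  proof (rule sum.cong[OF refl])
    fix l assume l: "l \<in> {..<N}"
    have 1: "(A ^\<^sub>m k) $$ (r,l) = cnj ((A ^\<^sub>m k) $$ (l,r))" using Suc.IH[of r l] Suc.prems l by simp
    have 2: "A $$ (l,c) = cnj (A $$ (c,l))" using h[of c l] Suc.prems l by simp
    show "(A ^\<^sub>m k) $$ (r,l) * A $$ (l,c) = cnj (A $$ (c,l) * (A ^\<^sub>m k) $$ (l,r))"
      by (subst 1, subst 2) (simp add: mult.commute)
  qed
  also have "\<dots> = cnj ((A * A ^\<^sub>m k) $$ (c,r))"
    using A Suc.prems by (simp add: scalar_prod_def lessThan_atLeast0)
  finally show ?case using comm by simp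
qed

lemma suminf_cnj': "summable f \<Longrightarrow> cnj (suminf f) = (\<Sum>k. cnj (f k))"
  by (metis sums_cnj sums_unique summable_sums)

lemma exp_adj:
  fixes A :: "complex mat" and \<theta> :: real
  assumes A: "A \<in> carrier_mat N N" and herm: "hermitian_mat A" and rc: "r < N" "c < N"
  shows "mat_exp ((-1) \<cdot>\<^sub>m ((- \<i> * complex_of_real \<theta>) \<cdot>\<^sub>m A)) $$ (r,c)
       = cnj (mat_exp ((- \<i> * complex_of_real \<theta>) \<cdot>\<^sub>m A) $$ (c,r))"
proof -
  define z where "z = - \<i> * complex_of_real \<theta>"
  have zc: "cnj z = - z" unfolding z_def by simp
  have e: "(-1) \<cdot>\<^sub>m (z \<cdot>\<^sub>m A) = (- z) \<cdot>\<^sub>m A" by (auto intro!: eq_matI)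
  have zA: "z \<cdot>\<^sub>m A \<in> carrier_mat N N" using A by simp
  have s: "summable (\<lambda>k. ((z \<cdot>\<^sub>m A) ^\<^sub>m k) $$ (c,r) / of_nat (fact k))"
    by (rule summable_norm_cancel, rule summable_pow_entry[OF zA]) (use rc in auto)
  have "mat_exp ((-1) \<cdot>\<^sub>m (z \<cdot>\<^sub>m A)) $$ (r,c) = (\<Sum>k. (- z) ^ k * (A ^\<^sub>m k) $$ (r,c) / of_nat (fact k))"
    unfolding e using A rc by (simp add: mat_exp_def pow_mat_smult[OF A])
  also have "\<dots> = (\<Sum>k. cnj (((z \<cdot>\<^sub>m A) ^\<^sub>m k) $$ (c,r) / of_nat (fact k)))"
    by (rule suminf_cong) (use A rc herm_pow[OF A herm, of c r] zc in \<open>simp add: pow_mat_smult[OF A]\<close>)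
  also have "\<dots> = cnj (mat_exp (z \<cdot>\<^sub>m A) $$ (c,r))"
    using suminf_cnj'[OF s] A rc by (simp add: mat_exp_def)
  finally show ?thesis unfolding z_def .
qed

definition sqn :: "complex vec \<Rightarrow> real" where
  "sqn v = (\<Sum>i<dim_vec v. (cmod (v $ i))\<^sup>2)"

lemma sqn_complex: "complex_of_real (sqn v) = (\<Sum>i<dim_vec v. cnj (v $ i) * v $ i)"
  unfolding sqn_def of_real_sum
  by (rule sum.cong[OF refl]) (metis complex_norm_square mult.commute)

lemma unitary_pres:
  fixes U V :: "complex mat"
  assumes U: "U \<in> carrier_mat N N" and V: "V \<in> carrier_mat N N" and VU: "V * U = 1\<^sub>m N"
    and adj: "\<And>r c. r < N \<Longrightarrow> c < N \<Longrightarrow> V $$ (r,c) = cnj (U $$ (c,r))"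
    and w: "w \<in> carrier_vec N"
  shows "sqn (U *\<^sub>v w) = sqn w"
proof -
  have uw: "(U *\<^sub>v w) $ r = (\<Sum>c<N. U $$ (r,c) * w $ c)" if "r < N" for r
    using U w that by (simp add: scalar_prod_def lessThan_atLeast0)
  have o: "(\<Sum>r<N. cnj (U $$ (r,c)) * U $$ (r,d)) = (if c = d then 1 else 0)" if "c < N" "d < N" for c d
  proof -
    have "(V * U) $$ (c,d) = (\<Sum>r<N. V $$ (c,r) * U $$ (r,d))"
      using U V that by (simp add: scalar_prod_def lessThan_atLeast0)
    then show ?thesis using VU that adj by simp
  qed
  have "complex_of_real (sqn (U *\<^sub>v w)) = (\<Sum>r<N. cnj ((U *\<^sub>v w) $ r) * (U *\<^sub>v w) $ r)"
    using U by (simp add: sqn_complex)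
  also have "\<dots> = (\<Sum>r<N. \<Sum>c<N. \<Sum>d<N. (cnj (w $ c) * w $ d) * (cnj (U $$ (r,c)) * U $$ (r,d)))"
    by (rule sum.cong[OF refl]) (simp add: uw sum_product mult_ac, rule sum.swap)
  also have "\<dots> = (\<Sum>c<N. \<Sum>d<N. (cnj (w $ c) * w $ d) * (\<Sum>r<N. cnj (U $$ (r,c)) * U $$ (r,d)))"
  proof -
    have "(\<Sum>r<N. \<Sum>c<N. \<Sum>d<N. (cnj (w $ c) * w $ d) * (cnj (U $$ (r,c)) * U $$ (r,d)))
      = (\<Sum>c<N. \<Sum>r<N. \<Sum>d<N. (cnj (w $ c) * w $ d) * (cnj (U $$ (r,c)) * U $$ (r,d)))"
      by (rule sum.swap)
    also have "\<dots> = (\<Sum>c<N. \<Sum>d<N. \<Sum>r<N. (cnj (w $ c) * w $ d) * (cnj (U $$ (r,c)) * U $$ (r,d)))"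
      by (rule sum.cong[OF refl], rule sum.swap)
    finally show ?thesis by (simp add: sum_distrib_left)
  qed
  also have "\<dots> = (\<Sum>c<N. cnj (w $ c) * w $ c)"
  proof (rule sum.cong[OF refl])
    fix c assume c: "c \<in> {..<N}"
    have "(\<Sum>d<N. (cnj (w $ c) * w $ d) * (\<Sum>r<N. cnj (U $$ (r,c)) * U $$ (r,d)))
        = (\<Sum>d<N. if c = d then cnj (w $ c) * w $ d else 0)"
      by (rule sum.cong[OF refl]) (use c o in auto)
    also have "\<dots> = cnj (w $ c) * w $ c" using c by simp
    finally show "(\<Sum>d<N. (cnj (w $ c) * w $ d) * (\<Sum>r<N. cnj (U $$ (r,c)) * U $$ (r,d))) = cnj (w $ c) * w $ c" .
  qed
  also have "\<dots> = complex_of_real (sqn w)"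
    using w by (simp add: sqn_complex)
  finally show ?thesis using of_real_eq_iff by blast
qed

definition respS :: "nat set \<Rightarrow> complex mat \<Rightarrow> bool" where
  "respS S A \<longleftrightarrow> (\<forall>r<dim_row A. \<forall>c<dim_col A. A $$ (r,c) \<noteq> 0 \<longrightarrow> (r \<in> S \<longleftrightarrow> c \<in> S))"

lemma respSD: "respS S A \<Longrightarrow> r < dim_row A \<Longrightarrow> c < dim_col A \<Longrightarrow> A $$ (r,c) \<noteq> 0 \<Longrightarrow> (r \<in> S \<longleftrightarrow> c \<in> S)"
  unfolding respS_def by blast

lemma respS_one: "respS S (1\<^sub>m N)"
  unfolding respS_def by auto

lemma sum_nonzero_ex: "sum f A \<noteq> 0 \<Longrightarrow> \<exists>x\<in>A. f x \<noteq> 0"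
proof (rule ccontr)
  assume a: "sum f A \<noteq> 0" and "\<not> (\<exists>x\<in>A. f x \<noteq> 0)"
  then have "\<forall>x\<in>A. f x = 0" by simp
  then have "sum f A = 0" by (rule sum.neutral)
  with a show False by simp
qed

lemma respS_mult:
  assumes A: "A \<in> carrier_mat N N" and B: "B \<in> carrier_mat N N"
    and rA: "respS S A" and rB: "respS S B"
  shows "respS S (A * B)"
  unfolding respS_def
proof (intro allI impI)
  fix r c assume r: "r < dim_row (A * B)" and c: "c < dim_col (A * B)" and nz: "(A * B) $$ (r,c) \<noteq> 0"
  have rc: "r < N" "c < N" using r c A B by auto
  have "(A * B) $$ (r,c) = (\<Sum>l<N. A $$ (r,l) * B $$ (l,c))"
    using A B rc by (simp add: scalar_prod_def lessThan_atLeast0)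
  with nz have "(\<Sum>l<N. A $$ (r,l) * B $$ (l,c)) \<noteq> 0" by simp
  from sum_nonzero_ex[OF this] obtain l where "l \<in> {..<N}" "A $$ (r,l) * B $$ (l,c) \<noteq> 0" by blast
  then have l: "l < N" "A $$ (r,l) \<noteq> 0" "B $$ (l,c) \<noteq> 0" by auto
  have "r \<in> S \<longleftrightarrow> l \<in> S" by (rule respSD[OF rA]) (use l rc A in auto)
  moreover have "l \<in> S \<longleftrightarrow> c \<in> S" by (rule respSD[OF rB]) (use l rc B in auto)
  ultimately show "r \<in> S \<longleftrightarrow> c \<in> S" by simp
qed

lemma respS_pow:
  assumes A: "A \<in> carrier_mat N N" and rA: "respS S A"
  shows "respS S (A ^\<^sub>m k)"
proof (induction k)
  case 0 then show ?case by (simp add: respS_one)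
next
  case (Suc k) then show ?case using respS_mult[OF pow_carrier_mat[OF A] A] rA by simp
qed

lemma respS_smult: assumes "respS S A" shows "respS S (a \<cdot>\<^sub>m A)"
  unfolding respS_def
proof (intro allI impI)
  fix r c assume "r < dim_row (a \<cdot>\<^sub>m A)" "c < dim_col (a \<cdot>\<^sub>m A)" "(a \<cdot>\<^sub>m A) $$ (r,c) \<noteq> 0"
  then show "r \<in> S \<longleftrightarrow> c \<in> S" by (intro respSD[OF assms]) auto
qed

lemma respS_exp:
  assumes A: "A \<in> carrier_mat N N" and rA: "respS S A"
  shows "respS S (mat_exp A)"
  unfolding respS_def
proof (intro allI impI)
  fix r c assume r: "r < dim_row (mat_exp A)" and c: "c < dim_col (mat_exp A)" and nz: "mat_exp A $$ (r,c) \<noteq> 0"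
  have rc: "r < N" "c < N" using r c A by (auto simp: mat_exp_def)
  show "r \<in> S \<longleftrightarrow> c \<in> S"
  proof (rule ccontr)
    assume ne: "\<not> (r \<in> S \<longleftrightarrow> c \<in> S)"
    have "(A ^\<^sub>m k) $$ (r,c) = 0" for k
      using respSD[OF respS_pow[OF A rA, of k], of r c] ne rc pow_mat_dim_square[OF A, of k] by auto
    hence "mat_exp A $$ (r,c) = 0" using rc A by (simp add: mat_exp_def)
    with nz show False by simp
  qed
qed

definition supp :: "nat set \<Rightarrow> complex vec \<Rightarrow> bool" where
  "supp S v \<longleftrightarrow> (\<forall>i<dim_vec v. i \<notin> S \<longrightarrow> v $ i = 0)"

lemma supp_mult:
  assumes U: "U \<in> carrier_mat N N" and rU: "respS S U" and w: "w \<in> carrier_vec N" and sw: "supp S w"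
  shows "supp S (U *\<^sub>v w)"
  unfolding supp_def
proof (intro allI impI)
  fix r assume r: "r < dim_vec (U *\<^sub>v w)" and nr: "r \<notin> S"
  have rN: "r < N" using r U by auto
  have "(U *\<^sub>v w) $ r = (\<Sum>c<N. U $$ (r,c) * w $ c)"
    using U w rN by (simp add: scalar_prod_def lessThan_atLeast0)
  also have "\<dots> = 0"
  proof (rule sum.neutral, intro ballI)
    fix c assume c: "c \<in> {..<N}"
    show "U $$ (r,c) * w $ c = 0"
    proof (cases "c \<in> S")
      case True
      then have "U $$ (r,c) = 0" using respSD[OF rU, of r c] nr rN c U by auto
      then show ?thesis by simp
    next
      case False
      then show ?thesis using sw c w unfolding supp_def by auto
    qed
  qed
  finally show "(U *\<^sub>v w) $ r = 0" .
qed

definition good :: "nat \<Rightarrow> nat set \<Rightarrow> complex mat \<Rightarrow> bool" where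
  "good N S U \<longleftrightarrow> U \<in> carrier_mat N N \<and> respS S U \<and> (\<forall>w\<in>carrier_vec N. sqn (U *\<^sub>v w) = sqn w)"

lemma good_one: "good N S (1\<^sub>m N)"
  unfolding good_def by (auto simp: respS_one)

lemma good_mult:
  assumes "good N S A" "good N S B" shows "good N S (A * B)"
proof -
  have A: "A \<in> carrier_mat N N" and B: "B \<in> carrier_mat N N" using assms unfolding good_def by auto
  have "sqn ((A * B) *\<^sub>v w) = sqn w" if w: "w \<in> carrier_vec N" for w
  proof -
    have "(A * B) *\<^sub>v w = A *\<^sub>v (B *\<^sub>v w)" using A B w by (rule assoc_mult_mat_vec)
    moreover have "B *\<^sub>v w \<in> carrier_vec N" using B w by simp
    ultimately show ?thesis using assms w unfolding good_def by auto
  qed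
  moreover have "respS S (A * B)" using respS_mult[OF A B] assms unfolding good_def by auto
  ultimately show ?thesis using A B unfolding good_def by auto
qed

lemma good_exp:
  fixes A :: "complex mat" and \<theta> :: real
  assumes A: "A \<in> carrier_mat N N" and herm: "hermitian_mat A" and rA: "respS S A"
  shows "good N S (mat_exp ((- \<i> * complex_of_real \<theta>) \<cdot>\<^sub>m A))"
proof -
  define K where "K = (- \<i> * complex_of_real \<theta>) \<cdot>\<^sub>m A"
  have K: "K \<in> carrier_mat N N" using A unfolding K_def by simp
  have "sqn (mat_exp K *\<^sub>v w) = sqn w" if w: "w \<in> carrier_vec N" for w
    by (rule unitary_pres[OF mat_exp_carrier[OF K] mat_exp_carrier[of "(-1) \<cdot>\<^sub>m K"] mat_exp_inv[OF K] _ w])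
       (use K exp_adj[OF A herm] in \<open>auto simp: K_def\<close>)
  moreover have "respS S (mat_exp K)"
    using respS_exp[OF K] respS_smult[OF rA] unfolding K_def by auto
  ultimately show ?thesis using K unfolding good_def K_def by auto
qed

lemma bit_sum_pow2: "finite Q \<Longrightarrow> bit (\<Sum>q\<in>Q. (2::nat) ^ q) p \<longleftrightarrow> p \<in> Q"
proof (induction Q arbitrary: p rule: finite_induct)
  case empty then show ?case by simp
next
  case (insert q Q)
  have "(\<Sum>q\<in>insert q Q. (2::nat) ^ q) = 2 ^ q + (\<Sum>q\<in>Q. 2 ^ q)"
    using insert by simp
  moreover have "bit (2 ^ q + (\<Sum>q\<in>Q. (2::nat) ^ q)) p \<longleftrightarrow> bit ((2::nat) ^ q) p \<or> bit (\<Sum>q\<in>Q. (2::nat) ^ q) p"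
    by (rule bit_disjunctive_add_iff) (use insert in \<open>auto simp: bit_exp_iff\<close>)
  ultimately show ?case using insert by (auto simp: bit_exp_iff)
qed

lemma nat_less_pow2_bits: "(z::nat) < 2 ^ N \<longleftrightarrow> (\<forall>p. bit z p \<longrightarrow> p < N)"
proof
  assume "z < 2 ^ N"
  then have "take_bit N z = z" by (simp add: take_bit_nat_eq_self_iff)
  then show "\<forall>p. bit z p \<longrightarrow> p < N" by (metis bit_take_bit_iff)
next
  assume a: "\<forall>p. bit z p \<longrightarrow> p < N"
  have "take_bit N z = z"
    by (rule bit_eqI) (use a in \<open>auto simp: bit_take_bit_iff\<close>)
  then show "z < 2 ^ N" by (metis take_bit_nat_eq_self_iff)
qed

lemma bit_flip: "bit (flip_bit q (c::nat)) p \<longleftrightarrow> (if p = q then \<not> bit c p else bit c p)"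
  by (auto simp: bit_flip_bit_iff)

lemma flip_less: "q < N \<Longrightarrow> (c::nat) < 2 ^ N \<Longrightarrow> flip_bit q c < 2 ^ N"
  unfolding nat_less_pow2_bits by (auto simp: bit_flip split: if_splits)

lemma blk_eq:
  fixes b b' i j n :: nat
  assumes "i < n" "j < n" "b * n + i = b' * n + j"
  shows "b = b' \<and> i = j"
proof -
  have "b = (b * n + i) div n" using assms(1) by simp
  moreover have "b' = (b' * n + j) div n" using assms(2) by simp
  ultimately have "b = b'" using assms(3) by simp
  then show ?thesis using assms(3) by simp
qed

lemma labelsD: "x \<in> labels m n \<Longrightarrow> b < m \<Longrightarrow> x b < n"
  unfolding labels_def by auto

lemma oh_eq:
  assumes x: "x \<in> labels m n"
  shows "oh_index m n x = (\<Sum>q\<in>(\<lambda>b. b * n + x b) ` {..<m}. 2 ^ q)"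
proof -
  have "inj_on (\<lambda>b. b * n + x b) {..<m}"
    by (rule inj_onI) (use blk_eq labelsD[OF x] in blast)
  then show ?thesis unfolding oh_index_def by (simp add: sum.reindex)
qed

lemma oh_bit:
  assumes x: "x \<in> labels m n"
  shows "bit (oh_index m n x) p \<longleftrightarrow> (\<exists>b<m. p = b * n + x b)"
  unfolding oh_eq[OF x] by (subst bit_sum_pow2) auto

lemma oh_less:
  assumes x: "x \<in> labels m n"
  shows "oh_index m n x < 2 ^ (m * n)"
  unfolding nat_less_pow2_bits oh_bit[OF x]
proof (intro allI impI)
  fix p assume "\<exists>b<m. p = b * n + x b"
  then obtain b where b: "b < m" "p = b * n + x b" by blast
  have "p < b * n + n" using b labelsD[OF x b(1)] by simp
  also have "b * n + n = Suc b * n" by simp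
  also have "\<dots> \<le> m * n" using b(1) by (intro mult_right_mono) auto
  finally show "p < m * n" .
qed

lemma oh_inj: "inj_on (oh_index m n) (labels m n)"
proof (rule inj_onI)
  fix x y assume x: "x \<in> labels m n" and y: "y \<in> labels m n" and e: "oh_index m n x = oh_index m n y"
  show "x = y"
  proof (rule ext)
    fix b show "x b = y b"
    proof (cases "b < m")
      case True
      have "bit (oh_index m n y) (b * n + x b)" unfolding e[symmetric] oh_bit[OF x] using True by blast
      then obtain b' where "b' < m" "b * n + x b = b' * n + y b'" unfolding oh_bit[OF y] by blast
      then show ?thesis using blk_eq[of "x b" n "y b'" b b'] labelsD[OF x True] labelsD[OF y] by auto
    next
      case False
      then show ?thesis using x y unfolding labels_def by (auto simp: PiE_def extensional_def)
    qed
  qed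
qed

lemma blk_less: "b < m \<Longrightarrow> i < n \<Longrightarrow> b * n + i < m * (n::nat)"
proof -
  assume "b < m" "i < n"
  then have "b * n + i < Suc b * n" by simp
  also have "\<dots> \<le> m * n" using \<open>b < m\<close> by (intro mult_right_mono) auto
  finally show ?thesis .
qed

lemma mult_sparse:
  fixes A :: "complex mat"
  assumes A: "A \<in> carrier_mat D D" and r: "r < D" and c: "c < D" and h: "h c < D"
  shows "(A * mat D D (\<lambda>(r,c). if r = h c then v c else 0)) $$ (r,c) = A $$ (r, h c) * v c"
proof -
  have "(A * mat D D (\<lambda>(r,c). if r = h c then v c else 0)) $$ (r,c)
      = (\<Sum>l<D. A $$ (r,l) * (if l = h c then v c else 0))"
    using A r c by (simp add: scalar_prod_def lessThan_atLeast0)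
  also have "\<dots> = (\<Sum>l<D. if l = h c then A $$ (r,l) * v c else 0)"
    by (rule sum.cong) auto
  also have "\<dots> = A $$ (r, h c) * v c" using h by (simp add: sum.delta)
  finally show ?thesis .
qed

lemma pauliX_carrier: "pauliX N q \<in> carrier_mat (2^N) (2^N)"
  unfolding pauliX_def by simp

lemma pauliY_carrier: "pauliY N q \<in> carrier_mat (2^N) (2^N)"
  unfolding pauliY_def by simp

lemma pauli_dims[simp]: "dim_row (pauliX N q) = 2^N" "dim_col (pauliX N q) = 2^N"
  "dim_row (pauliY N q) = 2^N" "dim_col (pauliY N q) = 2^N"
  unfolding pauliX_def pauliY_def by simp_all

lemma XX_entry:
  assumes "qi < N" "qj < N" "r < 2^N" "c < 2^N"
  shows "(pauliX N qi * pauliX N qj) $$ (r,c) = (if r = flip_bit qi (flip_bit qj c) then 1 else 0)"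
proof -
  have e: "pauliX N qj = mat (2^N) (2^N) (\<lambda>(r,c). if r = flip_bit qj c then (\<lambda>_. 1) c else 0)"
    unfolding pauliX_def by simp
  have fl: "flip_bit qj c < 2^N" using flip_less assms by blast
  show ?thesis
    unfolding e
    apply (subst mult_sparse[OF pauliX_carrier])
    using assms fl by (auto simp: pauliX_def)
qed

lemma YY_entry:
  assumes "qi < N" "qj < N" "r < 2^N" "c < 2^N"
  shows "(pauliY N qi * pauliY N qj) $$ (r,c) = (if r = flip_bit qi (flip_bit qj c)
     then (if bit (flip_bit qj c) qi then - \<i> else \<i>) * (if bit c qj then - \<i> else \<i>) else 0)"
proof -
  have e: "pauliY N qj = mat (2^N) (2^N) (\<lambda>(r,c). if r = flip_bit qj c then (\<lambda>c. if bit c qj then - \<i> else \<i>) c else 0)"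
    unfolding pauliY_def by simp
  have fl: "flip_bit qj c < 2^N" using flip_less assms by blast
  show ?thesis
    unfolding e
    apply (subst mult_sparse[OF pauliY_carrier])
    using assms fl by (auto simp: pauliY_def)
qed

definition Tm :: "nat \<Rightarrow> nat \<Rightarrow> nat \<Rightarrow> nat \<Rightarrow> complex" where
  "Tm qi qj r c = (if r = flip_bit qi (flip_bit qj c) \<and> bit c qi \<noteq> bit c qj then 2 else 0)"

lemma XXYY_entry:
  assumes "qi < N" "qj < N" "r < 2^N" "c < 2^N" "qi \<noteq> qj"
  shows "(pauliX N qi * pauliX N qj + pauliY N qi * pauliY N qj) $$ (r,c) = Tm qi qj r c"
proof -
  have b: "bit (flip_bit qj c) qi = bit c qi" using assms(5) by (simp add: bit_flip)
  have "(pauliX N qi * pauliX N qj + pauliY N qi * pauliY N qj) $$ (r,c)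
     = (pauliX N qi * pauliX N qj) $$ (r,c) + (pauliY N qi * pauliY N qj) $$ (r,c)"
    using assms by simp
  also have "\<dots> = Tm qi qj r c"
    unfolding XX_entry[OF assms(1-4)] YY_entry[OF assms(1-4)] b Tm_def
    by (cases "bit c qi"; cases "bit c qj") auto
  finally show ?thesis .
qed

lemma mixer_entry:
  assumes b: "b < m" and r: "r < 2^(m*n)" and c: "c < 2^(m*n)"
  shows "mixer_block m n b $$ (r,c) = (\<Sum>i<n. \<Sum>j\<in>{i<..<n}. Tm (b*n+i) (b*n+j) r c)"
proof -
  have "mixer_block m n b $$ (r,c) = (\<Sum>i<n. \<Sum>j\<in>{i<..<n}.
       (pauliX (m*n) (b*n+i) * pauliX (m*n) (b*n+j)
        + pauliY (m*n) (b*n+i) * pauliY (m*n) (b*n+j)) $$ (r,c))"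
    unfolding mixer_block_def using r c by simp
  also have "\<dots> = (\<Sum>i<n. \<Sum>j\<in>{i<..<n}. Tm (b*n+i) (b*n+j) r c)"
    by (intro sum.cong refl XXYY_entry) (use b r c blk_less in auto)
  finally show ?thesis .
qed

lemma mixer_carrier: "mixer_block m n b \<in> carrier_mat (2^(m*n)) (2^(m*n))"
  unfolding mixer_block_def by simp

abbreviation ohS :: "nat \<Rightarrow> nat \<Rightarrow> nat set" where
  "ohS m n \<equiv> oh_index m n ` labels m n"

lemma bitF: "qi \<noteq> qj \<Longrightarrow> bit (flip_bit qi (flip_bit qj (c::nat))) p \<longleftrightarrow> (if p = qi \<or> p = qj then \<not> bit c p else bit c p)"
  by (auto simp: bit_flip)

lemma F_inv: "qi \<noteq> qj \<Longrightarrow> flip_bit qi (flip_bit qj (flip_bit qi (flip_bit qj (c::nat)))) = c"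
  by (rule bit_eqI) (simp add: bitF)

lemma F_comm: "flip_bit qi (flip_bit qj (c::nat)) = flip_bit qj (flip_bit qi c)"
  by (rule bit_eqI) (auto simp: bit_flip)

lemma F_key:
  assumes "qi \<noteq> qj" "r = flip_bit qi (flip_bit qj (c::nat))" "bit c qi \<noteq> bit c qj"
  shows "c = flip_bit qi (flip_bit qj r) \<and> bit r qi \<noteq> bit r qj"
  using assms F_inv[OF assms(1), of c] by (auto simp: bitF)

lemma Tm_sym: "qi \<noteq> qj \<Longrightarrow> Tm qi qj r c = Tm qi qj c r"
proof -
  assume q: "qi \<noteq> qj"
  have "(r = flip_bit qi (flip_bit qj c) \<and> bit c qi \<noteq> bit c qj) \<longleftrightarrow> (c = flip_bit qi (flip_bit qj r) \<and> bit r qi \<noteq> bit r qj)"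
    using F_key[OF q, of r c] F_key[OF q, of c r] by blast
  then show ?thesis unfolding Tm_def by simp
qed

lemma Tm_cnj: "cnj (Tm qi qj r c) = Tm qi qj r c"
  by (simp add: Tm_def)

lemma mixer_herm:
  assumes b: "b < m"
  shows "hermitian_mat (mixer_block m n b)"
  unfolding hermitian_mat_def
proof (intro conjI allI impI)
  show "dim_row (mixer_block m n b) = dim_col (mixer_block m n b)" by (simp add: mixer_block_def)
  fix i j assume i: "i < dim_row (mixer_block m n b)" and j: "j < dim_col (mixer_block m n b)"
  have ij: "i < 2^(m*n)" "j < 2^(m*n)" using i j by (auto simp: mixer_block_def)
  show "mixer_block m n b $$ (j,i) = cnj (mixer_block m n b $$ (i,j))"
    unfolding mixer_entry[OF b ij] mixer_entry[OF b ij(2,1)] cnj_sum Tm_cnj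
    by (intro sum.cong refl Tm_sym) auto
qed

lemma swap_lab:
  assumes x: "x \<in> labels m n" and b: "b < m" and i: "i < n" and j: "j < n" and ij: "i \<noteq> j"
    and bi: "bit (oh_index m n x) (b*n+i)" and bj: "\<not> bit (oh_index m n x) (b*n+j)"
  shows "x(b:=j) \<in> labels m n \<and> flip_bit (b*n+i) (flip_bit (b*n+j) (oh_index m n x)) = oh_index m n (x(b:=j))"
proof
  define y where "y = x(b:=j)"
  obtain b' where b': "b' < m" "b*n+i = b'*n + x b'" using bi unfolding oh_bit[OF x] by blast
  have xb: "x b = i" using blk_eq[OF i labelsD[OF x b'(1)] b'(2)] by simp
  show y: "x(b:=j) \<in> labels m n"
    using x b j unfolding labels_def by (auto simp: PiE_iff extensional_def)
  have q: "b*n+i \<noteq> b*n+j" using ij by simp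
  have yb: "y b' = x b'" if "b' \<noteq> b" for b' using that unfolding y_def by simp
  have yl: "y \<in> labels m n" using y unfolding y_def .
  have key: "bit (flip_bit (b*n+i) (flip_bit (b*n+j) (oh_index m n x))) p \<longleftrightarrow> bit (oh_index m n y) p" for p
  proof -
    have L: "bit (flip_bit (b*n+i) (flip_bit (b*n+j) (oh_index m n x))) p \<longleftrightarrow>
       (if p = b*n+i \<or> p = b*n+j then \<not> bit (oh_index m n x) p else bit (oh_index m n x) p)"
      by (rule bitF[OF q])
    have R: "bit (oh_index m n y) p \<longleftrightarrow> (\<exists>b'<m. p = b'*n + y b')" by (rule oh_bit[OF yl])
    show ?thesis
    proof (cases "p = b*n+i")
      case True
      have "\<not> (\<exists>b'<m. p = b'*n + y b')"
      proof
        assume "\<exists>b'<m. p = b'*n + y b'"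
        then obtain b' where b'm: "b' < m" and e0: "p = b'*n + y b'" by blast
        have e: "b*n+i = b'*n + y b'" using True e0 by simp
        have "y b' < n" using labelsD[OF yl b'm] .
        from blk_eq[OF i this e] have "b = b' \<and> i = y b'" .
        then show False using ij unfolding y_def by simp
      qed
      then show ?thesis using True bi L R by simp
    next
      case ni: False
      show ?thesis
      proof (cases "p = b*n+j")
        case True
        have "\<exists>b'<m. p = b'*n + y b'" using True b unfolding y_def by (intro exI[of _ b]) simp
        then show ?thesis using True bj L R by simp
      next
        case nj: False
        have "(\<exists>b'<m. p = b'*n + x b') \<longleftrightarrow> (\<exists>b'<m. p = b'*n + y b')"
        proof
          assume "\<exists>b'<m. p = b'*n + x b'"
          then obtain b' where b'm: "b' < m" and e: "p = b'*n + x b'" by blast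
          have "b' \<noteq> b" using ni xb e by auto
          then show "\<exists>b'<m. p = b'*n + y b'" using yb b'm e by metis
        next
          assume "\<exists>b'<m. p = b'*n + y b'"
          then obtain b' where b'm: "b' < m" and e: "p = b'*n + y b'" by blast
          have "b' \<noteq> b" using nj e unfolding y_def by auto
          then show "\<exists>b'<m. p = b'*n + x b'" using yb b'm e by metis
        qed
        then show ?thesis using ni nj L R unfolding oh_bit[OF x] by simp
      qed
    qed
  qed
  show "flip_bit (b*n+i) (flip_bit (b*n+j) (oh_index m n x)) = oh_index m n (x(b:=j))"
    unfolding y_def[symmetric] by (rule bit_eqI) (rule key)
qed

lemma swapS:
  assumes c: "c \<in> ohS m n" and b: "b < m" and i: "i < n" and j: "j < n" and ij: "i \<noteq> j"
    and d: "bit c (b*n+i) \<noteq> bit c (b*n+j)"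
  shows "flip_bit (b*n+i) (flip_bit (b*n+j) c) \<in> ohS m n"
proof -
  obtain x where x: "x \<in> labels m n" "c = oh_index m n x" using c by blast
  show ?thesis
  proof (cases "bit c (b*n+i)")
    case True
    then have "\<not> bit c (b*n+j)" using d by simp
    then show ?thesis using swap_lab[OF x(1) b i j ij] True x(2) by auto
  next
    case False
    then have "bit c (b*n+j)" using d by simp
    then have "x(b:=i) \<in> labels m n \<and> flip_bit (b*n+j) (flip_bit (b*n+i) c) = oh_index m n (x(b:=i))"
      using swap_lab[OF x(1) b j i] ij False x(2) by auto
    then show ?thesis using F_comm[of "b*n+i" "b*n+j" c] by auto
  qed
qed

lemma mixer_respS:
  assumes b: "b < m"
  shows "respS (ohS m n) (mixer_block m n b)"
  unfolding respS_def
proof (intro allI impI)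
  fix r c assume r: "r < dim_row (mixer_block m n b)" and c: "c < dim_col (mixer_block m n b)"
    and nz: "mixer_block m n b $$ (r,c) \<noteq> 0"
  have rc: "r < 2^(m*n)" "c < 2^(m*n)" using r c by (auto simp: mixer_block_def)
  from nz have "(\<Sum>i<n. \<Sum>j\<in>{i<..<n}. Tm (b*n+i) (b*n+j) r c) \<noteq> 0" unfolding mixer_entry[OF b rc] .
  from sum_nonzero_ex[OF this] obtain i where i: "i \<in> {..<n}" "(\<Sum>j\<in>{i<..<n}. Tm (b*n+i) (b*n+j) r c) \<noteq> 0" by blast
  from sum_nonzero_ex[OF i(2)] obtain j where j: "j \<in> {i<..<n}" "Tm (b*n+i) (b*n+j) r c \<noteq> 0" by blast
  have ij: "i < n" "j < n" "i \<noteq> j" "b*n+i \<noteq> b*n+j" using i j by auto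
  have T: "r = flip_bit (b*n+i) (flip_bit (b*n+j) c)" "bit c (b*n+i) \<noteq> bit c (b*n+j)"
    using j(2) unfolding Tm_def by (auto split: if_splits)
  have T': "c = flip_bit (b*n+i) (flip_bit (b*n+j) r)" "bit r (b*n+i) \<noteq> bit r (b*n+j)"
    using F_key[OF ij(4) T] by auto
  show "r \<in> ohS m n \<longleftrightarrow> c \<in> ohS m n"
  proof
    assume "r \<in> ohS m n"
    from swapS[OF this b ij(1,2,3) T'(2)] show "c \<in> ohS m n" using T'(1) by simp
  next
    assume "c \<in> ohS m n"
    from swapS[OF this b ij(1,2,3) T(2)] show "r \<in> ohS m n" using T(1) by simp
  qed
qed

lemma diag_respS:
  assumes "diagonal_mat H" shows "respS S H"
  unfolding respS_def
proof (intro allI impI)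
  fix r c assume "r < dim_row H" "c < dim_col H" "H $$ (r,c) \<noteq> 0"
  then have "r = c" using assms unfolding diagonal_mat_def by blast
  then show "r \<in> S \<longleftrightarrow> c \<in> S" by simp
qed

lemma finite_labels: "finite (labels m n)"
  unfolding labels_def by (simp add: finite_PiE)

lemma card_labels: "card (labels m n) = n ^ m"
  unfolding labels_def by (simp add: card_PiE)

lemma ohS_sub: "ohS m n \<subseteq> {..<2^(m*n)}"
  using oh_less by blast

lemma s0_carrier: "s0 m n \<in> carrier_vec (2^(m*n))"
  unfolding s0_def by simp

lemma s0_entry:
  assumes z: "z < 2^(m*n)"
  shows "s0 m n $ z = (if z \<in> ohS m n then complex_of_real ((1 / sqrt n) ^ m) else 0)"
proof -
  define a where "a = complex_of_real ((1 / sqrt n) ^ m)"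
  have "s0 m n $ z = (\<Sum>x\<in>labels m n. if oh_index m n x = z then a else 0)"
    unfolding s0_def a_def using z by simp
  also have "\<dots> = (if z \<in> ohS m n then a else 0)"
  proof (cases "z \<in> ohS m n")
    case True
    then obtain x0 where x0: "x0 \<in> labels m n" "z = oh_index m n x0" by blast
    have "(\<Sum>x\<in>labels m n. if oh_index m n x = z then a else 0) = (\<Sum>x\<in>labels m n. if x = x0 then a else 0)"
    proof (rule sum.cong[OF refl])
      fix x assume "x \<in> labels m n"
      then have "oh_index m n x = z \<longleftrightarrow> x = x0" using x0 oh_inj[of m n] by (auto dest: inj_onD)
      then show "(if oh_index m n x = z then a else 0) = (if x = x0 then a else 0)" by simp
    qed
    also have "\<dots> = a" using x0(1) finite_labels by (simp add: sum.delta')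
    finally show ?thesis using True by simp
  next
    case False
    then have "(\<Sum>x\<in>labels m n. if oh_index m n x = z then a else 0) = 0"
      by (intro sum.neutral) auto
    then show ?thesis using False by simp
  qed
  finally show ?thesis unfolding a_def .
qed

lemma s0_supp: "supp (ohS m n) (s0 m n)"
  unfolding supp_def
proof (intro allI impI)
  fix i assume "i < dim_vec (s0 m n)" "i \<notin> ohS m n"
  moreover have "dim_vec (s0 m n) = 2^(m*n)" using s0_carrier[of m n] by simp
  ultimately show "s0 m n $ i = 0" using s0_entry[of i m n] by simp
qed

lemma s0_sqn:
  assumes n: "n \<ge> 1"
  shows "sqn (s0 m n) = 1"
proof -
  define c where "c = (cmod (complex_of_real ((1 / sqrt n) ^ m)))\<^sup>2"
  define t where "t = (1 / sqrt (real n)) ^ m"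
  have t0: "t \<ge> 0" unfolding t_def by simp
  have c1: "c = t\<^sup>2" unfolding c_def t_def[symmetric] norm_of_real using t0 by simp
  have "t\<^sup>2 = ((1 / sqrt (real n))\<^sup>2) ^ m" unfolding t_def by (metis power_mult mult.commute)
  also have "(1 / sqrt (real n))\<^sup>2 = 1 / real n" by (simp add: power_divide)
  finally have c: "c = (1 / real n) ^ m" using c1 by simp
  have "sqn (s0 m n) = (\<Sum>z<2^(m*n). if z \<in> ohS m n then c else 0)"
    unfolding sqn_def using s0_carrier[of m n] by (intro sum.cong) (auto simp: s0_entry c_def)
  also have "\<dots> = (\<Sum>z\<in>{..<2^(m*n)} \<inter> ohS m n. c)"
    by (rule sum.inter_restrict[symmetric]) simp
  also have "{..<2^(m*n)} \<inter> ohS m n = ohS m n" using ohS_sub by blast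
  also have "(\<Sum>z\<in>ohS m n. c) = real (card (ohS m n)) * c" by simp
  also have "card (ohS m n) = n ^ m" using card_image[OF oh_inj] card_labels by simp
  finally show ?thesis using c n by (simp add: power_divide)
qed

lemma upto_good:
  assumes "k \<le> m"
  shows "good (2^(m*n)) (ohS m n) (mixer_unitary_upto m n \<beta> k)"
  using assms
proof (induction k)
  case 0 then show ?case by (simp add: good_one)
next
  case (Suc k)
  have k: "k < m" using Suc.prems by simp
  have "good (2^(m*n)) (ohS m n) (mat_exp ((- \<i> * complex_of_real \<beta>) \<cdot>\<^sub>m mixer_block m n k))"
    by (rule good_exp[OF mixer_carrier mixer_herm[OF k] mixer_respS[OF k]])
  then show ?case using good_mult[OF Suc.IH] Suc.prems by simp
qed

theorem mainTheorem9:
  fixes m n :: nat and H :: "complex mat" and xs :: "nat \<Rightarrow> nat" and \<gamma> \<beta> :: real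
  assumes "n \<ge> 2" and "m \<ge> 1"
    and "H \<in> carrier_mat (2^(m*n)) (2^(m*n))"
    and "hermitian_mat H" and "diagonal_mat H"
    and "xs \<in> labels m n"
  shows "\<exists>\<pi>. (\<forall>b<m. \<pi> b permutes {..<n}) \<and>
    (cmod ((U_M m n \<beta> * U_C H \<gamma> *\<^sub>v s0 m n) $ oh_index m n (blockperm m \<pi> xs)))\<^sup>2
      \<ge> 1 / real n ^ m"
proof -
  let ?D = "2^(m*n) :: nat"
  let ?S = "ohS m n"
  let ?L = "labels m n"
  have gC: "good ?D ?S (U_C H \<gamma>)"
    unfolding U_C_def by (rule good_exp[OF assms(3) assms(4) diag_respS[OF assms(5)]])
  have gM: "good ?D ?S (U_M m n \<beta>)" unfolding U_M_def by (rule upto_good) simp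
  have gG: "good ?D ?S (U_M m n \<beta> * U_C H \<gamma>)" by (rule good_mult[OF gM gC])
  define v where "v = U_M m n \<beta> * U_C H \<gamma> *\<^sub>v s0 m n"
  have G: "U_M m n \<beta> * U_C H \<gamma> \<in> carrier_mat ?D ?D" and rG: "respS ?S (U_M m n \<beta> * U_C H \<gamma>)"
    using gG unfolding good_def by auto
  have sv: "sqn v = 1"
    using gG s0_carrier[of m n] s0_sqn[of n m] assms(1) unfolding good_def v_def by auto
  have supv: "supp ?S v" unfolding v_def by (rule supp_mult[OF G rG s0_carrier s0_supp])
  have dimv: "dim_vec v = ?D" unfolding v_def dim_mult_mat_vec by (rule carrier_matD(1)[OF G])
  define f where "f x = (cmod (v $ oh_index m n x))\<^sup>2" for x
  have "1 = (\<Sum>z<?D. (cmod (v $ z))\<^sup>2)" using sv dimv unfolding sqn_def by simp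
  also have "\<dots> = (\<Sum>z\<in>?S. (cmod (v $ z))\<^sup>2)"
  proof (rule sum.mono_neutral_right)
    show "finite {..<?D}" by simp
    show "?S \<subseteq> {..<?D}" by (rule ohS_sub)
    show "\<forall>z\<in>{..<?D} - ?S. (cmod (v $ z))\<^sup>2 = 0"
      using supv dimv unfolding supp_def by auto
  qed
  also have "\<dots> = (\<Sum>x\<in>?L. f x)"
    unfolding f_def by (rule sum.reindex[OF oh_inj, unfolded comp_def])
  finally have tot: "(\<Sum>x\<in>?L. f x) = 1" by simp
  have cardL: "real (card ?L) = real n ^ m" by (simp add: card_labels)
  obtain x0 where x0: "x0 \<in> ?L" "f x0 \<ge> 1 / real n ^ m"
  proof (rule ccontr)
    assume "\<not> thesis"
    with that have lt: "\<forall>x\<in>?L. f x < 1 / real n ^ m" by force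
    have "(\<Sum>x\<in>?L. f x) < (\<Sum>x\<in>?L. 1 / real n ^ m)"
      by (rule sum_strict_mono) (use finite_labels assms(6) lt in auto)
    also have "\<dots> = 1" using cardL assms(1) by simp
    finally show False using tot by simp
  qed
  define \<pi> where "\<pi> b = Transposition.transpose (xs b) (x0 b)" for b
  have perm: "\<forall>b<m. \<pi> b permutes {..<n}"
    using labelsD[OF assms(6)] labelsD[OF x0(1)] unfolding \<pi>_def by (auto intro!: permutes_swap_id)
  have bp: "blockperm m \<pi> xs = x0"
  proof
    fix b show "blockperm m \<pi> xs b = x0 b"
    proof (cases "b < m")
      case True then show ?thesis unfolding blockperm_def \<pi>_def by simp
    next
      case False then show ?thesis using x0(1) unfolding blockperm_def labels_def
        by (auto simp: PiE_def extensional_def)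
    qed
  qed
  show ?thesis
    by (rule exI[of _ \<pi>]) (use perm bp x0(2) in \<open>simp add: f_def v_def\<close>)
qed

end
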